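(* Let $\psi,\phi\in \mathbf{\Psi}_n$ and $m:=\min_{t\in\Omega_n}\frac{\psi(t)}{\phi(t)}$, $M:=\max_{t\in\Omega_n}\frac{\psi(t)}{\phi(t)}$. Then: (i) $\frac{m^2}{M^2}\cdot C_{\rm NJ}(|\!|\!|\cdot|\!|\!|_\phi) \le C_{\rm NJ}(|\!|\!|\cdot|\!|\!|_\psi)\le \frac{M^2}{m^2}\cdot C_{\rm NJ}(|\!|\!|\cdot|\!|\!|_\phi)$; (ii) $\frac{m^2}{M^2}\cdot C_{\rm NJ}(|\!|\!|\cdot|\!|\!|_{\phi^*}) \le C_{\rm NJ}(|\!|\!|\cdot|\!|\!|_{\psi^*})\le\frac{M^2}{m^2}\cdot C_{\rm NJ}(|\!|\!|\cdot|\!|\!|_{\phi^*})$.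
   Context: Let $(X,\|\cdot\|)$ be a normed vector space, $n\ge2$. $\Omega_n:=\{t\in\mathbb{R}^n\mid t_i\ge0,\ \sum_i t_i=1\}$, $\Omega_n^\circ:=\{t\in\Omega_n\mid t_i<1\ \forall i\}$. $\mathbf{\Psi}_n$ is the class of convex continuous $\psi:\Omega_n\to\mathbb{R}$ with (B1) $\psi(\mathbf{e}_i)=1$ for all standard unit vectors $\mathbf{e}_i$ and (B2) $\psi(t)\ge(1-t_i)\psi\big(\frac{t_1}{1-t_i},\ldots,\frac{t_{i-1}}{1-t_i},0,\frac{t_{i+1}}{1-t_i},\ldots,\frac{t_n}{1-t_i}\big)$ for all $t\in\Omega_n^\circ$, $i=1,\ldots,n$. For $\psi\in\mathbf{\Psi}_n$, $|\!|\!|x|\!|\!|_\psi:=\big(\sum_{i}\|x_i\|\big)\,\psi\big(\frac{\|x_1\|}{\sum_{i}\|x_i\|},\ldots,\frac{\|x_n\|}{\sum_{i}\|x_i\|}\big)$ for $0\ne x\in X^n$, $|\!|\!|0|\!|\!|_\psi:=0$; $\psi^*(s):=\max_{t\in\Omega_n}\frac{\langle t,s\rangle}{\psi(t)}$ and $|\!|\!|\cdot|\!|\!|_{\psi^*}$ is the dual norm of $|\!|\!|\cdot|\!|\!|_\psi$ on $(X^n)^*$. For a norm $N$ on a vector space $Y$, the von Neumann–Jordan constant is $C_{\rm NJ}(N):=\sup\Big\{\frac{N(x+y)^2+N(x-y)^2}{2(N(x)^2+N(y)^2)}\ \Big|\ x,y\in Y,\ N(x)+N(y)>0\Big\}$.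 *)

theory Defs
  imports "HOL-Analysis.Analysis"
begin

text \<open>The simplex Omega_n, indexed by a finite type 'n (n = CARD('n)).\<close>
definition Omega :: "(real^'n) set" where
  "Omega = {t. (\<forall>i. 0 \<le> t$i) \<and> (\<Sum>i\<in>UNIV. t$i) = 1}"

definition Omega_int :: "(real^'n) set" where
  "Omega_int = {t \<in> Omega. \<forall>i. t$i < 1}"

definition PsiClass :: "(real^'n \<Rightarrow> real) set" where
  "PsiClass = {psi. convex_on Omega psi \<and> continuous_on Omega psi
      \<and> (\<forall>i. psi (axis i 1) = 1)
      \<and> (\<forall>t\<in>Omega_int. \<forall>i.
            psi t \<ge> (1 - t$i) * psi (\<chi> j. if j = i then 0 else t$j / (1 - t$i)))}"

definition psi_norm :: "(real^'n \<Rightarrow> real) \<Rightarrow> ('a::real_normed_vector)^'n \<Rightarrow> real" where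
  "psi_norm psi x =
     (if x = 0 then 0
      else (let s = (\<Sum>i\<in>UNIV. norm (x$i)) in s * psi (\<chi> i. norm (x$i) / s)))"

definition dual_psi_norm ::
  "(real^'n \<Rightarrow> real) \<Rightarrow> ((('a::real_normed_vector)^'n) \<Rightarrow>\<^sub>L real) \<Rightarrow> real" where
  "dual_psi_norm psi F = Sup {\<bar>blinfun_apply F x\<bar> | x. psi_norm psi x \<le> 1}"

definition cNJ :: "('v::real_vector \<Rightarrow> real) \<Rightarrow> real" where
  "cNJ N = Sup {((N (x + y))^2 + (N (x - y))^2) / (2 * ((N x)^2 + (N y)^2)) | x y.
                 N x + N y > 0}"

end

theory Submission
  imports Defs
begin

definition goodG :: "'a::real_normed_vector \<Rightarrow> ('a \<times> real) set \<Rightarrow> bool" where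
 "goodG v G \<longleftrightarrow> (v, norm v) \<in> G
   \<and> (\<forall>x a y b. (x,a)\<in>G \<longrightarrow> (y,b)\<in>G \<longrightarrow> (x+y, a+b)\<in>G)
   \<and> (\<forall>x a c. (x,a)\<in>G \<longrightarrow> (c *\<^sub>R x, c*a) \<in> G)
   \<and> (\<forall>x a b. (x,a)\<in>G \<longrightarrow> (x,b)\<in>G \<longrightarrow> a=b)
   \<and> (\<forall>x a. (x,a)\<in>G \<longrightarrow> a \<le> norm x)"

lemma goodG_init:
  fixes v :: "'a::real_normed_vector"
  assumes "v \<noteq> 0"
  shows "goodG v (range (\<lambda>c. (c *\<^sub>R v, c * norm v)))"
  unfolding goodG_def
proof (intro conjI allI impI)
  show "(v, norm v) \<in> range (\<lambda>c. (c *\<^sub>R v, c * norm v))"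
    by (rule image_eqI[of _ _ 1]) auto
next
  fix x a y b assume "(x,a) \<in> range (\<lambda>c. (c *\<^sub>R v, c * norm v))" "(y,b) \<in> range (\<lambda>c. (c *\<^sub>R v, c * norm v))"
  then obtain c d where "x = c *\<^sub>R v" "a = c * norm v" "y = d *\<^sub>R v" "b = d * norm v" by auto
  then show "(x+y, a+b) \<in> range (\<lambda>c. (c *\<^sub>R v, c * norm v))"
    by (intro image_eqI[of _ _ "c+d"]) (auto simp: scaleR_add_left distrib_right)
next
  fix x a c assume "(x,a) \<in> range (\<lambda>c. (c *\<^sub>R v, c * norm v))"
  then obtain d where "x = d *\<^sub>R v" "a = d * norm v" by auto
  then show "(c *\<^sub>R x, c*a) \<in> range (\<lambda>c. (c *\<^sub>R v, c * norm v))"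
    by (intro image_eqI[of _ _ "c*d"]) auto
next
  fix x a b assume "(x,a) \<in> range (\<lambda>c. (c *\<^sub>R v, c * norm v))" "(x,b) \<in> range (\<lambda>c. (c *\<^sub>R v, c * norm v))"
  then obtain c d where "x = c *\<^sub>R v" "a = c * norm v" "x = d *\<^sub>R v" "b = d * norm v" by blast
  then have "c = d" using assms by (metis scaleR_cancel_right)
  then show "a = b" using \<open>a = _\<close> \<open>b = _\<close> by simp
next
  fix x a assume "(x,a) \<in> range (\<lambda>c. (c *\<^sub>R v, c * norm v))"
  then obtain c where "x = c *\<^sub>R v" "a = c * norm v" by auto
  then show "a \<le> norm x" by (simp add: mult_right_mono)
qed

lemma goodG_add: "goodG v G \<Longrightarrow> (x,a)\<in>G \<Longrightarrow> (y,b)\<in>G \<Longrightarrow> (x+y, a+b)\<in>G"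
  unfolding goodG_def by blast
lemma goodG_scl: "goodG v G \<Longrightarrow> (x,a)\<in>G \<Longrightarrow> (c *\<^sub>R x, c*a) \<in> G"
  unfolding goodG_def by blast
lemma goodG_fun: "goodG v G \<Longrightarrow> (x,a)\<in>G \<Longrightarrow> (x,b)\<in>G \<Longrightarrow> a = b"
  unfolding goodG_def by blast
lemma goodG_bnd: "goodG v G \<Longrightarrow> (x,a)\<in>G \<Longrightarrow> a \<le> norm x"
  unfolding goodG_def by blast
lemma goodG_v: "goodG v G \<Longrightarrow> (v, norm v)\<in>G"
  unfolding goodG_def by blast

lemma goodG_zero: "goodG v G \<Longrightarrow> (0, 0) \<in> G"
  unfolding goodG_def by (metis mult_zero_left scaleR_zero_left)

lemma goodG_extend:
  fixes v :: "'a::real_normed_vector"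
  assumes G: "goodG v G" and x0: "x0 \<notin> fst ` G"
  shows "\<exists>G'. goodG v G' \<and> G \<subseteq> G' \<and> G' \<noteq> G"
proof -
  have addG: "\<And>x a y b. (x,a)\<in>G \<Longrightarrow> (y,b)\<in>G \<Longrightarrow> (x+y, a+b)\<in>G"
   and scl: "\<And>x a c. (x,a)\<in>G \<Longrightarrow> (c *\<^sub>R x, c*a) \<in> G"
   and funG: "\<And>x a b. (x,a)\<in>G \<Longrightarrow> (x,b)\<in>G \<Longrightarrow> a=b"
   and bnd: "\<And>x a. (x,a)\<in>G \<Longrightarrow> a \<le> norm x"
   and vin: "(v, norm v) \<in> G"
    using goodG_add[OF G] goodG_scl[OF G] goodG_fun[OF G] goodG_bnd[OF G] goodG_v[OF G] by blast+
  define L where "L = (\<lambda>p. snd p - norm (fst p - x0)) ` G"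
  define xi where "xi = Sup L"
  have key: "a - norm (y - x0) \<le> norm (z + x0) - b" if "(y,a)\<in>G" "(z,b)\<in>G" for y a z b
  proof -
    have "a + b \<le> norm (y + z)" using bnd[OF addG[OF that]] .
    also have "\<dots> = norm ((y - x0) + (z + x0))" by simp
    also have "\<dots> \<le> norm (y - x0) + norm (z + x0)" by (rule norm_triangle_ineq)
    finally show ?thesis by simp
  qed
  have Lne: "L \<noteq> {}" using goodG_zero[OF G] unfolding L_def by auto
  have Lbdd: "bdd_above L"
  proof (rule bdd_aboveI)
    fix l assume "l \<in> L"
    then obtain y a where ya: "(y,a)\<in>G" "l = a - norm (y - x0)" unfolding L_def by auto
    show "l \<le> norm (0 + x0) - 0" using key[OF ya(1) goodG_zero[OF G]] ya(2) by simp
  qed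
  have lo: "a - norm (y - x0) \<le> xi" if "(y,a)\<in>G" for y a
    unfolding xi_def
  proof (rule cSup_upper[OF _ Lbdd])
    show "a - norm (y - x0) \<in> L" unfolding L_def using rev_image_eqI[OF that, of _ "\<lambda>p. snd p - norm (fst p - x0)"] by simp
  qed
  have hi: "xi \<le> norm (z + x0) - b" if "(z,b)\<in>G" for z b
    unfolding xi_def by (rule cSup_least[OF Lne]) (use key that in \<open>auto simp: L_def\<close>)
  define G' where "G' = {(y + t *\<^sub>R x0, a + t * xi) | y a t. (y,a)\<in>G}"
  have uniq: "t = u \<and> y = z" if "(y,a)\<in>G" "(z,b)\<in>G" "y + t *\<^sub>R x0 = z + u *\<^sub>R x0" for y z a b t u
  proof (cases "t = u")
    case True then show ?thesis using that by simp
  next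
    case False
    have "(t - u) *\<^sub>R x0 = z - y" using that(3) by (simp add: algebra_simps)
    then have "(1/(t-u)) *\<^sub>R ((t - u) *\<^sub>R x0) = (1/(t-u)) *\<^sub>R (z - y)" by simp
    then have "x0 = (1/(t-u)) *\<^sub>R (z - y)" using False by simp
    moreover have "((1/(t-u)) *\<^sub>R (z + (-1) *\<^sub>R y), (1/(t-u)) * (b + (-1) * a)) \<in> G"
      using scl[OF addG[OF that(2) scl[OF that(1)]]] .
    ultimately have "x0 \<in> fst ` G" by (metis (no_types, lifting) fst_conv image_eqI scaleR_minus1_left diff_conv_add_uminus)
    then show ?thesis using x0 by blast
  qed
  have G'I: "(y + t *\<^sub>R x0, a + t * xi) \<in> G'" if "(y,a)\<in>G" for y a t
    unfolding G'_def using that by blast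
  have "goodG v G'"
    unfolding goodG_def
  proof (intro conjI allI impI)
    show "(v, norm v) \<in> G'" using G'I[OF vin, of 0] by simp
  next
    fix x a y b assume "(x,a) \<in> G'" "(y,b) \<in> G'"
    then obtain x1 a1 t y1 b1 u where "x = x1 + t *\<^sub>R x0" "a = a1 + t * xi" "(x1,a1)\<in>G"
       "y = y1 + u *\<^sub>R x0" "b = b1 + u * xi" "(y1,b1)\<in>G" unfolding G'_def by blast
    then show "(x+y, a+b) \<in> G'" using G'I[OF addG[OF \<open>(x1,a1)\<in>G\<close> \<open>(y1,b1)\<in>G\<close>], of "t+u"]
      by (simp add: algebra_simps)
  next
    fix x a c assume "(x,a) \<in> G'"
    then obtain x1 a1 t where "x = x1 + t *\<^sub>R x0" "a = a1 + t * xi" "(x1,a1)\<in>G"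
      unfolding G'_def by blast
    then show "(c *\<^sub>R x, c*a) \<in> G'" using G'I[OF scl[OF \<open>(x1,a1)\<in>G\<close>, of c], of "c*t"]
      by (simp add: algebra_simps)
  next
    fix x a b assume "(x,a) \<in> G'" "(x,b) \<in> G'"
    then obtain x1 a1 t y1 b1 u where "x = x1 + t *\<^sub>R x0" "a = a1 + t * xi" "(x1,a1)\<in>G"
       "x = y1 + u *\<^sub>R x0" "b = b1 + u * xi" "(y1,b1)\<in>G" unfolding G'_def by blast
    with uniq[of x1 a1 y1 b1 t u] funG show "a = b" by auto
  next
    fix x a assume "(x,a) \<in> G'"
    then obtain y a1 t where xe: "x = y + t *\<^sub>R x0" and ae: "a = a1 + t * xi" and ya: "(y,a1)\<in>G"
      unfolding G'_def by blast
    show "a \<le> norm x"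
    proof (cases "t = 0")
      case True then show ?thesis using xe ae bnd[OF ya] by simp
    next
      case False
      have yt: "((1/t) *\<^sub>R y, (1/t) * a1) \<in> G" using scl[OF ya] .
      show ?thesis
      proof (cases "t > 0")
        case True
        have "xi \<le> norm ((1/t) *\<^sub>R y + x0) - (1/t) * a1" using hi[OF yt] .
        then have "t * xi \<le> t * (norm ((1/t) *\<^sub>R y + x0) - (1/t) * a1)"
          using True by (simp add: mult_left_mono)
        also have "\<dots> = norm (t *\<^sub>R ((1/t) *\<^sub>R y + x0)) - a1"
          using True by (simp add: right_diff_distrib)
        also have "t *\<^sub>R ((1/t) *\<^sub>R y + x0) = x" using True xe by (simp add: scaleR_add_right)
        finally show ?thesis using ae by simp
      next
        case False
        with \<open>t \<noteq> 0\<close> have tn: "t < 0" by simp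
        define s where "s = -t"
        have sp: "s > 0" using tn s_def by simp
        have ys: "((1/s) *\<^sub>R y, (1/s) * a1) \<in> G" using scl[OF ya] .
        have "(1/s) * a1 - norm ((1/s) *\<^sub>R y - x0) \<le> xi" using lo[OF ys] .
        then have "s * ((1/s) * a1 - norm ((1/s) *\<^sub>R y - x0)) \<le> s * xi"
          using sp by (simp add: mult_left_mono)
        then have "a1 - norm (s *\<^sub>R ((1/s) *\<^sub>R y - x0)) \<le> s * xi"
          using sp by (simp add: right_diff_distrib)
        moreover have "s *\<^sub>R ((1/s) *\<^sub>R y - x0) = x" using sp xe s_def
          by (simp add: scaleR_diff_right)
        ultimately have "a1 - norm x \<le> s * xi" by simp
        moreover have "t * xi = - (s * xi)" using s_def by simp
        ultimately show ?thesis using ae by linarith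
      qed
    qed
  qed
  moreover have "G \<subseteq> G'" using G'I[of _ _ 0] by auto
  moreover have "(x0, xi) \<in> G'" using G'I[OF goodG_zero[OF G], of 1] by simp
  then have "G' \<noteq> G" using x0 by (metis fst_conv image_eqI)
  ultimately show ?thesis by blast
qed

lemma exists_nonzero_functional:
  fixes v :: "'a::real_normed_vector"
  assumes "v \<noteq> 0"
  shows "\<exists>f::'a \<Rightarrow> real. bounded_linear f \<and> f v \<noteq> 0"
proof -
  define A where "A = {G. goodG v G}"
  have "\<exists>M\<in>A. \<forall>X\<in>A. M \<subseteq> X \<longrightarrow> X = M"
  proof (rule subset_Zorn_nonempty)
    show "A \<noteq> {}" using goodG_init[OF assms] unfolding A_def by blast
  next
    fix C assume Cne: "C \<noteq> {}" and ch: "subset.chain A C"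
    then have CA: "C \<subseteq> A" and cmp: "\<And>X Y. X\<in>C \<Longrightarrow> Y\<in>C \<Longrightarrow> X \<subseteq> Y \<or> Y \<subseteq> X"
      by (auto simp: subset_chain_def)
    have gC: "\<And>X. X \<in> C \<Longrightarrow> goodG v X" using CA A_def by auto
    have two: "\<exists>Z\<in>C. p \<in> Z \<and> q \<in> Z" if "p \<in> \<Union>C" "q \<in> \<Union>C" for p q
      using that cmp by blast
    show "\<Union>C \<in> A" unfolding A_def mem_Collect_eq goodG_def
    proof (intro conjI allI impI)
      show "(v, norm v) \<in> \<Union>C" using Cne gC goodG_v by blast
    next
      fix x a y b assume "(x,a) \<in> \<Union>C" "(y,b) \<in> \<Union>C"
      then obtain Z where "Z\<in>C" "(x,a)\<in>Z" "(y,b)\<in>Z" using two by blast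
      then show "(x+y, a+b) \<in> \<Union>C" using goodG_add[OF gC[of Z]] by blast
    next
      fix x a c assume "(x,a) \<in> \<Union>C"
      then obtain Z where "Z\<in>C" "(x,a)\<in>Z" by blast
      then show "(c *\<^sub>R x, c*a) \<in> \<Union>C" using goodG_scl[OF gC[of Z]] by blast
    next
      fix x a b assume "(x,a) \<in> \<Union>C" "(x,b) \<in> \<Union>C"
      then obtain Z where "Z\<in>C" "(x,a)\<in>Z" "(x,b)\<in>Z" using two by blast
      then show "a = b" using goodG_fun[OF gC[of Z]] by blast
    next
      fix x a assume "(x,a) \<in> \<Union>C"
      then obtain Z where "Z\<in>C" "(x,a)\<in>Z" by blast
      then show "a \<le> norm x" using goodG_bnd[OF gC[of Z]] by blast
    qed
  qed
  then obtain G where GA: "goodG v G" and mx: "\<And>X. goodG v X \<Longrightarrow> G \<subseteq> X \<Longrightarrow> X = G"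
    unfolding A_def by blast
  have dom: "\<exists>a. (x,a) \<in> G" for x
  proof (rule ccontr)
    assume "\<not> ?thesis"
    then have "x \<notin> fst ` G" by force
    from goodG_extend[OF GA this] mx show False by blast
  qed
  have addG: "\<And>x a y b. (x,a)\<in>G \<Longrightarrow> (y,b)\<in>G \<Longrightarrow> (x+y, a+b)\<in>G"
   and scl: "\<And>x a c. (x,a)\<in>G \<Longrightarrow> (c *\<^sub>R x, c*a) \<in> G"
   and funG: "\<And>x a b. (x,a)\<in>G \<Longrightarrow> (x,b)\<in>G \<Longrightarrow> a=b"
   and bnd: "\<And>x a. (x,a)\<in>G \<Longrightarrow> a \<le> norm x"
   and vin: "(v, norm v) \<in> G"
    using goodG_add[OF GA] goodG_scl[OF GA] goodG_fun[OF GA] goodG_bnd[OF GA] goodG_v[OF GA] by blast+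
  define f where "f x = (SOME a. (x,a) \<in> G)" for x
  have fG: "(x, f x) \<in> G" for x unfolding f_def using dom[of x] by (metis someI_ex)
  have fadd: "f (x + y) = f x + f y" for x y using funG[OF fG addG[OF fG fG]] .
  have fscl: "f (c *\<^sub>R x) = c * f x" for c x using funG[OF fG scl[OF fG]] .
  have fb: "\<bar>f x\<bar> \<le> norm x" for x
  proof -
    have "f x \<le> norm x" using bnd[OF fG] .
    moreover have "- f x \<le> norm x"
      using bnd[OF scl[OF fG[of x], of "-1"]] by simp
    ultimately show ?thesis by simp
  qed
  have "bounded_linear f"
  proof (rule bounded_linear_intro[where K=1])
    show "f (x + y) = f x + f y" for x y by (rule fadd)
    show "f (r *\<^sub>R x) = r *\<^sub>R f x" for r x using fscl by simp
    show "norm (f x) \<le> norm x * 1" for x using fb by simp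
  qed
  moreover have "f v = norm v" using funG[OF fG vin] .
  ultimately show ?thesis using assms by auto
qed


lemma Omega_iff: "t \<in> Omega \<longleftrightarrow> (\<forall>i. 0 \<le> t$i) \<and> (\<Sum>i\<in>UNIV. t$i) = 1"
  by (simp add: Omega_def)

lemma Omega_le1:
  fixes t :: "real^'n"
  assumes "t \<in> Omega" shows "t$i \<le> 1"
proof -
  have "t$i \<le> (\<Sum>j\<in>UNIV. t$j)"
    by (rule member_le_sum) (use assms in \<open>auto simp: Omega_iff\<close>)
  then show ?thesis using assms by (simp add: Omega_iff)
qed

lemma Omega_compact: "compact (Omega :: (real^'n) set)"
proof -
  have eq: "(Omega :: (real^'n) set) = {t. \<forall>i. 0 \<le> t$i} \<inter> {t. (\<Sum>i\<in>UNIV. t$i) = 1}"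
    by (auto simp: Omega_iff)
  have c1: "closed {t::real^'n. \<forall>i. 0 \<le> t$i}"
    by (intro closed_Collect_all closed_Collect_le continuous_intros)
  have c2: "closed {t::real^'n. (\<Sum>i\<in>UNIV. t$i) = 1}"
    by (intro closed_Collect_eq continuous_intros)
  have b: "bounded (Omega :: (real^'n) set)"
    unfolding bounded_iff
  proof (intro exI[of _ 1] ballI)
    fix t :: "real^'n" assume t: "t \<in> Omega"
    have "norm t \<le> (\<Sum>i\<in>UNIV. \<bar>t$i\<bar>)" by (rule norm_le_l1_cart)
    also have "\<dots> = (\<Sum>i\<in>UNIV. t$i)" using t by (simp add: Omega_iff)
    finally show "norm t \<le> 1" using t by (simp add: Omega_iff)
  qed
  have "closed (Omega::(real^'n) set)" by (subst eq) (rule closed_Int[OF c1 c2])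
  then show ?thesis using b by (simp add: compact_eq_bounded_closed)
qed

lemma axis_Omega: "(axis i 1 :: real^'n) \<in> Omega"
  by (simp add: Omega_iff axis_def)

lemma Omega_ne: "(Omega :: (real^'n) set) \<noteq> {}"
  using axis_Omega by blast

lemma psi_ge_coord_aux:
  fixes psi :: "real^'n \<Rightarrow> real"
  assumes psi: "psi \<in> PsiClass"
  shows "\<forall>t\<in>Omega. card {i. t$i \<noteq> 0} = k \<longrightarrow> (\<forall>j. t$j \<le> psi t)"
proof (induction k rule: less_induct)
  case (less k)
  show ?case
  proof (intro ballI impI allI)
    fix t :: "real^'n" and j assume t: "t \<in> Omega" and k: "card {i. t$i \<noteq> 0} = k"
    have nn: "\<And>i. 0 \<le> t$i" and s1: "(\<Sum>i\<in>UNIV. t$i) = 1" using t by (auto simp: Omega_iff)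
    have le1: "\<And>i. t$i \<le> 1" using Omega_le1[OF t] .
    have srem: "(\<Sum>l\<in>UNIV. f l) = f i + (\<Sum>l\<in>UNIV-{i}. f l)" for f :: "'n \<Rightarrow> real" and i
      by (simp add: sum.remove)
    show "t$j \<le> psi t"
    proof (cases "\<exists>i. t$i = 1")
      case True
      then obtain i where ti: "t$i = 1" by blast
      have "(\<Sum>l\<in>UNIV-{i}. t$l) = 0" using s1 srem[of "\<lambda>l. t$l" i] ti by simp
      then have z: "\<And>l. l \<noteq> i \<Longrightarrow> t$l = 0"
        using sum_nonneg_eq_0_iff[of "UNIV-{i}" "\<lambda>l. t$l"] nn by auto
      have "t = axis i 1"
        by (simp add: vec_eq_iff axis_def ti z)
      then have "psi t = 1" using psi by (simp add: PsiClass_def)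
      then show ?thesis using le1 by simp
    next
      case False
      have "\<forall>i. t$i < 1" using False le1 by (metis order_less_le)
      then have tint: "t \<in> Omega_int" using t by (simp add: Omega_int_def)
      have "\<exists>i. i \<noteq> j \<and> t$i > 0"
      proof (rule ccontr)
        assume "\<not> ?thesis"
        then have "\<And>l. l \<noteq> j \<Longrightarrow> \<not> t$l > 0" by blast
        then have "\<And>l. l \<noteq> j \<Longrightarrow> t$l = 0" using nn by (simp add: not_less eq_iff)
        then have "(\<Sum>l\<in>UNIV-{j}. t$l) = 0" by simp
        then have "t$j = 1" using s1 srem[of "\<lambda>l. t$l" j] by simp
        then show False using False by blast
      qed
      then obtain i where ij: "i \<noteq> j" and ti: "t$i > 0" by blast
      have ti1: "t$i < 1" using False le1[of i] by (simp add: order_less_le)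
      define t' where "t' = (\<chi> l. if l = i then 0 else t$l / (1 - t$i))"
      have B2: "psi t \<ge> (1 - t$i) * psi t'"
        using psi tint unfolding PsiClass_def t'_def by blast
      have t'nn: "\<And>l. 0 \<le> t'$l" unfolding t'_def using nn ti1 by simp
      have "(\<Sum>l\<in>UNIV. t'$l) = (\<Sum>l\<in>UNIV-{i}. t'$l)" using srem[of "\<lambda>l. t'$l" i]
        by (simp add: t'_def)
      also have "\<dots> = (\<Sum>l\<in>UNIV-{i}. t$l / (1 - t$i))"
        by (intro sum.cong) (auto simp: t'_def)
      also have "\<dots> = (\<Sum>l\<in>UNIV-{i}. t$l) / (1 - t$i)" by (simp add: sum_divide_distrib)
      also have "\<dots> = (1 - t$i) / (1 - t$i)" using s1 srem[of "\<lambda>l. t$l" i] by simp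
      also have "\<dots> = 1" using ti1 by simp
      finally have t'O: "t' \<in> Omega" using t'nn by (simp add: Omega_iff)
      have supp: "{l. t'$l \<noteq> 0} = {l. t$l \<noteq> 0} - {i}"
        unfolding t'_def using ti1 by auto
      have "card {l. t'$l \<noteq> 0} < k"
        unfolding supp k[symmetric] using ti by (intro card_Diff1_less) auto
      with less.IH have IH: "t'$j \<le> psi t'" using t'O by blast
      have "t$j = (1 - t$i) * t'$j" unfolding t'_def using ij ti1 by simp
      also have "\<dots> \<le> (1 - t$i) * psi t'" using IH ti1 by (simp add: mult_left_mono)
      also have "\<dots> \<le> psi t" using B2 .
      finally show ?thesis .
    qed
  qed
qed

lemma psi_ge_coord:
  "psi \<in> PsiClass \<Longrightarrow> t \<in> Omega \<Longrightarrow> t$j \<le> psi t"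
  using psi_ge_coord_aux by blast

lemma psi_pos:
  fixes psi :: "real^'n \<Rightarrow> real"
  assumes "psi \<in> PsiClass" "t \<in> Omega" shows "psi t > 0"
proof -
  have "\<exists>j. t$j > 0"
  proof (rule ccontr)
    assume "\<not> ?thesis"
    then have "(\<Sum>i\<in>UNIV. t$i) \<le> 0" by (intro sum_nonpos) (simp add: not_less)
    then show False using assms(2) by (simp add: Omega_iff)
  qed
  then obtain j where "t$j > 0" by blast
  then show ?thesis using psi_ge_coord[OF assms, of j] by simp
qed

lemma psi_bounds:
  fixes psi :: "real^'n \<Rightarrow> real"
  assumes "psi \<in> PsiClass"
  shows "\<exists>c C. 0 < c \<and> (\<forall>t\<in>Omega. c \<le> psi t \<and> psi t \<le> C)"
proof -
  have co: "continuous_on Omega psi" using assms by (simp add: PsiClass_def)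
  have K: "compact (psi ` Omega)" by (rule compact_continuous_image[OF co Omega_compact])
  have ne: "psi ` Omega \<noteq> {}" using Omega_ne by blast
  obtain s where s: "s \<in> psi ` Omega" "\<forall>u\<in>psi ` Omega. s \<le> u" using compact_attains_inf[OF K ne] by blast
  obtain S where S: "S \<in> psi ` Omega" "\<forall>u\<in>psi ` Omega. u \<le> S" using compact_attains_sup[OF K ne] by blast
  have "s > 0" using s(1) psi_pos[OF assms] by blast
  then show ?thesis using s S by blast
qed


definition l1n :: "('a::real_normed_vector)^'n \<Rightarrow> real" where
  "l1n x = (\<Sum>i\<in>UNIV. norm (x$i))"

lemma l1n_nonneg: "0 \<le> l1n x" unfolding l1n_def by (simp add: sum_nonneg)

lemma l1n_pos: "x \<noteq> 0 \<Longrightarrow> 0 < l1n x"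
proof -
  assume "x \<noteq> 0"
  then obtain i where "x$i \<noteq> 0" by (auto simp: vec_eq_iff)
  then have "0 < norm (x$i)" by simp
  also have "norm (x$i) \<le> l1n x" unfolding l1n_def by (rule member_le_sum) auto
  finally show ?thesis .
qed

lemma l1n_add: "l1n (x + y) \<le> l1n x + l1n y"
  unfolding l1n_def sum.distrib[symmetric] by (intro sum_mono) (simp add: norm_triangle_ineq)

lemma l1n_diff: "l1n (x - y) \<le> l1n x + l1n y"
  unfolding l1n_def sum.distrib[symmetric] by (intro sum_mono) (simp add: norm_triangle_ineq4)

lemma norm_le_l1n: "norm x \<le> l1n x"
  unfolding l1n_def norm_vec_def by (rule L2_set_le_sum) simp

lemma dir_Omega:
  fixes x :: "('a::real_normed_vector)^'n"
  assumes "x \<noteq> 0" shows "(\<chi> i. norm (x$i) / l1n x) \<in> Omega"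
proof -
  have p: "0 < l1n x" using l1n_pos[OF assms] .
  have "(\<Sum>i\<in>UNIV. norm (x$i) / l1n x) = (\<Sum>i\<in>UNIV. norm (x$i)) / l1n x"
    by (simp add: sum_divide_distrib)
  also have "\<dots> = 1" using p by (simp add: l1n_def)
  finally show ?thesis using p by (simp add: Omega_iff)
qed

lemma psi_norm_eq:
  "x \<noteq> 0 \<Longrightarrow> psi_norm f x = l1n x * f (\<chi> i. norm (x$i) / l1n x)"
  by (simp add: psi_norm_def l1n_def Let_def)

lemma psi_norm_zero[simp]: "psi_norm f 0 = 0"
  by (simp add: psi_norm_def)

lemma psi_norm_le:
  fixes x :: "('a::real_normed_vector)^'n"
  assumes "\<forall>t\<in>Omega. f t \<le> a * g t"
  shows "psi_norm f x \<le> a * psi_norm g x"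
proof (cases "x = 0")
  case True then show ?thesis by simp
next
  case False
  let ?t = "(\<chi> i. norm (x$i) / l1n x)"
  have "f ?t \<le> a * g ?t" using assms dir_Omega[OF False] by blast
  then have "l1n x * f ?t \<le> l1n x * (a * g ?t)" using l1n_nonneg by (rule mult_left_mono)
  then show ?thesis using False by (simp add: psi_norm_eq algebra_simps)
qed

lemma psi_norm_one: "psi_norm (\<lambda>t. 1) x = l1n x"
  by (cases "x = 0") (auto simp: psi_norm_eq l1n_def)

lemma psi_norm_nonneg:
  fixes x :: "('a::real_normed_vector)^'n"
  assumes "\<forall>t\<in>Omega. 0 \<le> f t" shows "0 \<le> psi_norm f x"
proof (cases "x = 0")
  case True then show ?thesis by simp
next
  case False
  have "0 \<le> f (\<chi> i. norm (x$i) / l1n x)" using assms dir_Omega[OF False] by blast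
  then show ?thesis using l1n_nonneg[of x] False by (simp add: psi_norm_eq)
qed

lemma psi_norm_pos:
  fixes x :: "('a::real_normed_vector)^'n"
  assumes "psi \<in> PsiClass" "x \<noteq> 0" shows "0 < psi_norm psi x"
  using psi_pos[OF assms(1) dir_Omega[OF assms(2)]] l1n_pos[OF assms(2)]
  by (simp add: psi_norm_eq assms(2))

lemma psi_norm_scale:
  fixes x :: "('a::real_normed_vector)^'n"
  shows "psi_norm f (r *\<^sub>R x) = \<bar>r\<bar> * psi_norm f x"
proof (cases "x = 0 \<or> r = 0")
  case True then show ?thesis by auto
next
  case False
  then have x: "x \<noteq> 0" and r: "r \<noteq> 0" by auto
  then have rx: "r *\<^sub>R x \<noteq> 0" by simp
  have l: "l1n (r *\<^sub>R x) = \<bar>r\<bar> * l1n x"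
    unfolding l1n_def by (simp add: sum_distrib_left)
  have d: "(\<chi> i. norm ((r *\<^sub>R x)$i) / l1n (r *\<^sub>R x)) = (\<chi> i. norm (x$i) / l1n x)"
    unfolding l using r l1n_pos[OF x] by (simp add: vec_eq_iff)
  show ?thesis unfolding psi_norm_eq[OF rx] psi_norm_eq[OF x] d l using r by simp
qed

lemma ratio_le:
  fixes n1 n2 d1 d2 k1 k2 :: real
  assumes "0 \<le> n1" "n1 \<le> k1 * n2" "0 < d2" "k2 * d2 \<le> d1" "0 < k2"
  shows "n1 / d1 \<le> (k1 / k2) * (n2 / d2)"
proof -
  have "n1 / d1 \<le> (k1 * n2) / (k2 * d2)"
    by (rule frac_le) (use assms in auto)
  also have "\<dots> = (k1 / k2) * (n2 / d2)" by simp
  finally show ?thesis .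
qed

lemma nj_cmp:
  fixes N1 N2 :: "'v::real_vector \<Rightarrow> real"
  assumes lo: "\<And>v. a * N2 v \<le> N1 v" and up: "\<And>v. N1 v \<le> b * N2 v"
    and a: "0 < a" and b: "0 < b" and nn: "\<And>v. 0 \<le> N2 v"
    and bdd: "bdd_above {((N2 (x + y))^2 + (N2 (x - y))^2) / (2 * ((N2 x)^2 + (N2 y)^2)) | x y. N2 x + N2 y > 0}"
    and ex: "\<exists>x y. N1 x + N1 y > 0"
  shows "cNJ N1 \<le> (b/a)^2 * cNJ N2"
  unfolding cNJ_def
proof (rule cSup_least)
  show "{((N1 (x + y))^2 + (N1 (x - y))^2) / (2 * ((N1 x)^2 + (N1 y)^2)) | x y. N1 x + N1 y > 0} \<noteq> {}"
    using ex by blast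
next
  fix r assume "r \<in> {((N1 (x + y))^2 + (N1 (x - y))^2) / (2 * ((N1 x)^2 + (N1 y)^2)) | x y. N1 x + N1 y > 0}"
  then obtain x y where r: "r = ((N1 (x + y))^2 + (N1 (x - y))^2) / (2 * ((N1 x)^2 + (N1 y)^2))"
    and p: "N1 x + N1 y > 0" by blast
  have n1nn: "0 \<le> N1 v" for v using lo[of v] nn[of v] a mult_nonneg_nonneg[of a "N2 v"] by linarith
  have sq_up: "(N1 v)^2 \<le> b^2 * (N2 v)^2" for v
  proof -
    have "(N1 v)^2 \<le> (b * N2 v)^2" using up[of v] n1nn[of v] by (rule power_mono)
    then show ?thesis by (simp add: power_mult_distrib)
  qed
  have sq_lo: "a^2 * (N2 v)^2 \<le> (N1 v)^2" for v
  proof -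
    have "(a * N2 v)^2 \<le> (N1 v)^2" using lo[of v] a nn[of v] by (intro power_mono) auto
    then show ?thesis by (simp add: power_mult_distrib)
  qed
  have p2: "N2 x + N2 y > 0"
  proof (rule ccontr)
    assume "\<not> ?thesis"
    then have "N2 x = 0" "N2 y = 0" using nn[of x] nn[of y] by linarith+
    then show False using up[of x] up[of y] p by simp
  qed
  have d2: "0 < 2 * ((N2 x)^2 + (N2 y)^2)"
  proof -
    have "N2 x > 0 \<or> N2 y > 0" using p2 nn[of x] nn[of y] by linarith
    then have "(N2 x)^2 + (N2 y)^2 > 0" by (auto intro: add_pos_nonneg add_nonneg_pos)
    then show ?thesis by simp
  qed
  have "r \<le> (b^2 / a^2) * (((N2 (x + y))^2 + (N2 (x - y))^2) / (2 * ((N2 x)^2 + (N2 y)^2)))"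
    unfolding r
  proof (rule ratio_le)
    show "0 \<le> (N1 (x + y))^2 + (N1 (x - y))^2" by simp
    show "(N1 (x + y))^2 + (N1 (x - y))^2 \<le> b^2 * ((N2 (x + y))^2 + (N2 (x - y))^2)"
      using sq_up[of "x+y"] sq_up[of "x-y"] by (simp add: distrib_left)
    show "0 < 2 * ((N2 x)^2 + (N2 y)^2)" by (rule d2)
    show "a^2 * (2 * ((N2 x)^2 + (N2 y)^2)) \<le> 2 * ((N1 x)^2 + (N1 y)^2)"
      using sq_lo[of x] sq_lo[of y] by (simp add: distrib_left)
    show "0 < a^2" using a by simp
  qed
  also have "\<dots> \<le> (b^2 / a^2) * Sup {((N2 (x + y))^2 + (N2 (x - y))^2) / (2 * ((N2 x)^2 + (N2 y)^2)) | x y. N2 x + N2 y > 0}"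
    by (intro mult_left_mono cSup_upper[OF _ bdd]) (use p2 in auto)
  finally show "r \<le> (b/a)^2 * Sup {((N2 (x + y))^2 + (N2 (x - y))^2) / (2 * ((N2 x)^2 + (N2 y)^2)) | x y. N2 x + N2 y > 0}"
    by (simp add: power_divide)
qed

lemma nj_bdd:
  fixes N L :: "'v::real_vector \<Rightarrow> real"
  assumes lo: "\<And>v. a * L v \<le> N v" and up: "\<And>v. N v \<le> b * L v"
    and a: "0 < a" and b: "0 < b" and nn: "\<And>v. 0 \<le> L v"
    and ta: "\<And>x y. L (x + y) \<le> L x + L y" and td: "\<And>x y. L (x - y) \<le> L x + L y"
  shows "bdd_above {((N (x + y))^2 + (N (x - y))^2) / (2 * ((N x)^2 + (N y)^2)) | x y. N x + N y > 0}"
proof (rule bdd_aboveI)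
  fix r assume "r \<in> {((N (x + y))^2 + (N (x - y))^2) / (2 * ((N x)^2 + (N y)^2)) | x y. N x + N y > 0}"
  then obtain x y where r: "r = ((N (x + y))^2 + (N (x - y))^2) / (2 * ((N x)^2 + (N y)^2))"
    and p: "N x + N y > 0" by blast
  have nnN: "0 \<le> N v" for v using lo[of v] nn[of v] a mult_nonneg_nonneg[of a "L v"] by linarith
  define P where "P = L x" define Q where "Q = L y"
  have P: "0 \<le> P" and Q: "0 \<le> Q" using nn unfolding P_def Q_def by auto
  have s1: "(N (x+y))^2 \<le> b^2 * (P + Q)^2"
  proof -
    have "N (x+y) \<le> b * (P + Q)" using up[of "x+y"] mult_left_mono[OF ta[of x y], of b] b unfolding P_def Q_def
      by linarith
    then have "(N (x+y))^2 \<le> (b * (P+Q))^2" using nnN by (intro power_mono) auto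
    then show ?thesis by (simp add: power_mult_distrib)
  qed
  have s2: "(N (x-y))^2 \<le> b^2 * (P + Q)^2"
  proof -
    have "N (x-y) \<le> b * (P + Q)" using up[of "x-y"] mult_left_mono[OF td[of x y], of b] b unfolding P_def Q_def
      by linarith
    then have "(N (x-y))^2 \<le> (b * (P+Q))^2" using nnN by (intro power_mono) auto
    then show ?thesis by (simp add: power_mult_distrib)
  qed
  have pq: "(P + Q)^2 \<le> 2 * (P^2 + Q^2)"
  proof -
    have "(P+Q)^2 + (P-Q)^2 = 2*(P^2+Q^2)" by (simp add: power2_eq_square algebra_simps)
    then show ?thesis using zero_le_power2[of "P - Q"] by linarith
  qed
  have pq2: "b^2 * (P+Q)^2 \<le> b^2 * (2*(P^2+Q^2))" by (rule mult_left_mono[OF pq]) simp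
  have pq3: "(2*b^2) * (2*(P^2+Q^2)) = 2 * (b^2 * (2*(P^2+Q^2)))" by simp
  have d: "0 < 2 * (P^2 + Q^2)"
  proof -
    have "P > 0 \<or> Q > 0"
    proof (rule ccontr)
      assume "\<not> ?thesis" then have "P = 0" "Q = 0" using P Q by auto
      then show False using up[of x] up[of y] p unfolding P_def Q_def by simp
    qed
    then have "P^2 + Q^2 > 0" using P Q by (auto intro: add_pos_nonneg add_nonneg_pos)
    then show ?thesis by simp
  qed
  have lo2: "a^2 * (L v)^2 \<le> (N v)^2" for v
  proof -
    have "(a * L v)^2 \<le> (N v)^2" using lo[of v] a nn[of v] by (intro power_mono) auto
    then show ?thesis by (simp add: power_mult_distrib)
  qed
  have "r \<le> ((2 * b^2) / a^2) * ((2 * (P^2 + Q^2)) / (2 * (P^2 + Q^2)))"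
    unfolding r
  proof (rule ratio_le)
    show "0 \<le> (N (x + y))^2 + (N (x - y))^2" by simp
    show "(N (x + y))^2 + (N (x - y))^2 \<le> (2 * b^2) * (2 * (P^2 + Q^2))"
      using s1 s2 pq2 pq3 by linarith
    show "0 < 2 * (P^2 + Q^2)" by (rule d)
    show "a^2 * (2 * (P^2 + Q^2)) \<le> 2 * ((N x)^2 + (N y)^2)"
      using lo2[of x] lo2[of y] unfolding P_def Q_def by (simp add: distrib_left)
    show "0 < a^2" using a by simp
  qed
  also have "\<dots> = (2 * b^2) / a^2" using d by simp
  finally show "r \<le> (2 * b^2) / a^2" .
qed


lemma psi_norm_ge:
  fixes x :: "('a::real_normed_vector)^'n"
  assumes "\<forall>t\<in>Omega. a * g t \<le> f t"
  shows "a * psi_norm g x \<le> psi_norm f x"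
proof (cases "x = 0")
  case True then show ?thesis by simp
next
  case False
  let ?t = "(\<chi> i. norm (x$i) / l1n x)"
  have "a * g ?t \<le> f ?t" using assms dir_Omega[OF False] by blast
  then have "l1n x * (a * g ?t) \<le> l1n x * f ?t" using l1n_nonneg by (rule mult_left_mono)
  then show ?thesis using False by (simp add: psi_norm_eq algebra_simps)
qed

lemma dual_set_bdd:
  fixes F :: "(('a::real_normed_vector)^'n) \<Rightarrow>\<^sub>L real"
  assumes c: "\<forall>t\<in>Omega. c \<le> f t" "0 < c"
  shows "bdd_above {\<bar>blinfun_apply F x\<bar> | x. psi_norm f x \<le> 1}"
proof (rule bdd_aboveI)
  fix r assume "r \<in> {\<bar>blinfun_apply F x\<bar> | x. psi_norm f x \<le> 1}"
  then obtain x where r: "r = \<bar>blinfun_apply F x\<bar>" and x: "psi_norm f x \<le> 1" by blast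
  have "c * psi_norm (\<lambda>t. 1) x \<le> psi_norm f x" by (rule psi_norm_ge) (use c in auto)
  then have "c * l1n x \<le> 1" using x by (simp add: psi_norm_one)
  then have l: "l1n x \<le> 1 / c" using c(2) by (simp add: field_simps)
  have "r \<le> norm F * norm x" unfolding r using norm_blinfun[of F x] by simp
  also have "\<dots> \<le> norm F * l1n x" by (intro mult_left_mono norm_le_l1n) simp
  also have "\<dots> \<le> norm F * (1 / c)" by (intro mult_left_mono l) simp
  finally show "r \<le> norm F * (1 / c)" .
qed

lemma dual_upper:
  assumes "bdd_above {\<bar>blinfun_apply F x\<bar> | x. psi_norm f x \<le> 1}" "psi_norm f x \<le> 1"
  shows "\<bar>blinfun_apply F x\<bar> \<le> dual_psi_norm f F"
  unfolding dual_psi_norm_def by (rule cSup_upper[OF _ assms(1)]) (use assms(2) in blast)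

lemma dual_least:
  fixes F :: "(('a::real_normed_vector)^'n) \<Rightarrow>\<^sub>L real"
  assumes "\<And>x. psi_norm f x \<le> 1 \<Longrightarrow> \<bar>blinfun_apply F x\<bar> \<le> B"
  shows "dual_psi_norm f F \<le> B"
  unfolding dual_psi_norm_def
proof (rule cSup_least)
  show "{\<bar>blinfun_apply F x\<bar> | x. psi_norm f x \<le> 1} \<noteq> {}"
    using psi_norm_zero[of f] by (metis (mono_tags, lifting) empty_Collect_eq zero_less_one_class.zero_le_one)
qed (use assms in blast)

lemma dual_nonneg:
  fixes F :: "(('a::real_normed_vector)^'n) \<Rightarrow>\<^sub>L real"
  assumes "bdd_above {\<bar>blinfun_apply F x\<bar> | x. psi_norm f x \<le> 1}"
  shows "0 \<le> dual_psi_norm f F"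
  using dual_upper[OF assms, of 0] by simp

lemma dual_add:
  fixes F G :: "(('a::real_normed_vector)^'n) \<Rightarrow>\<^sub>L real"
  assumes "bdd_above {\<bar>blinfun_apply F x\<bar> | x. psi_norm f x \<le> 1}"
    "bdd_above {\<bar>blinfun_apply G x\<bar> | x. psi_norm f x \<le> 1}"
  shows "dual_psi_norm f (F + G) \<le> dual_psi_norm f F + dual_psi_norm f G"
    and "dual_psi_norm f (F - G) \<le> dual_psi_norm f F + dual_psi_norm f G"
proof -
  show "dual_psi_norm f (F + G) \<le> dual_psi_norm f F + dual_psi_norm f G"
  proof (rule dual_least)
    fix x :: "'a^'n" assume x: "psi_norm f x \<le> 1"
    have "\<bar>blinfun_apply (F + G) x\<bar> \<le> \<bar>blinfun_apply F x\<bar> + \<bar>blinfun_apply G x\<bar>"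
      by (simp add: blinfun.add_left abs_triangle_ineq)
    then show "\<bar>blinfun_apply (F + G) x\<bar> \<le> dual_psi_norm f F + dual_psi_norm f G"
      using dual_upper[OF assms(1) x] dual_upper[OF assms(2) x] by linarith
  qed
  show "dual_psi_norm f (F - G) \<le> dual_psi_norm f F + dual_psi_norm f G"
  proof (rule dual_least)
    fix x :: "'a^'n" assume x: "psi_norm f x \<le> 1"
    have "\<bar>blinfun_apply (F - G) x\<bar> \<le> \<bar>blinfun_apply F x\<bar> + \<bar>blinfun_apply G x\<bar>"
      by (simp add: blinfun.diff_left abs_triangle_ineq4)
    then show "\<bar>blinfun_apply (F - G) x\<bar> \<le> dual_psi_norm f F + dual_psi_norm f G"
      using dual_upper[OF assms(1) x] dual_upper[OF assms(2) x] by linarith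
  qed
qed

lemma dual_cmp:
  fixes F :: "(('a::real_normed_vector)^'n) \<Rightarrow>\<^sub>L real"
  assumes le: "\<forall>t\<in>Omega. f t \<le> k * g t" and k: "0 < k"
    and bdd: "bdd_above {\<bar>blinfun_apply F x\<bar> | x. psi_norm f x \<le> 1}"
  shows "dual_psi_norm g F \<le> k * dual_psi_norm f F"
proof (rule dual_least)
  fix x :: "'a^'n" assume x: "psi_norm g x \<le> 1"
  define y where "y = (1/k) *\<^sub>R x"
  have "psi_norm f x \<le> k * psi_norm g x" by (rule psi_norm_le[OF le])
  also have "\<dots> \<le> k" using x k by simp
  finally have "psi_norm f y \<le> 1" unfolding y_def psi_norm_scale using k by (simp add: field_simps)
  then have "\<bar>blinfun_apply F y\<bar> \<le> dual_psi_norm f F" by (rule dual_upper[OF bdd])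
  moreover have "\<bar>blinfun_apply F x\<bar> = k * \<bar>blinfun_apply F y\<bar>"
    unfolding y_def using k by (simp add: blinfun.scaleR_right abs_mult)
  ultimately show "\<bar>blinfun_apply F x\<bar> \<le> k * dual_psi_norm f F"
    using k by (simp add: mult_left_mono)
qed

lemma dual_pos:
  fixes F :: "(('a::real_normed_vector)^'n) \<Rightarrow>\<^sub>L real"
  assumes psi: "psi \<in> PsiClass"
    and bdd: "bdd_above {\<bar>blinfun_apply F x\<bar> | x. psi_norm psi x \<le> 1}"
    and F: "F \<noteq> 0"
  shows "0 < dual_psi_norm psi F"
proof -
  obtain x where Fx: "blinfun_apply F x \<noteq> 0" using F by (metis blinfun_eqI zero_blinfun.rep_eq)
  then have x0: "x \<noteq> 0" by auto
  have p: "0 < psi_norm psi x" by (rule psi_norm_pos[OF psi x0])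
  define y where "y = (1 / psi_norm psi x) *\<^sub>R x"
  have "psi_norm psi y = 1" unfolding y_def psi_norm_scale using p by simp
  then have "\<bar>blinfun_apply F y\<bar> \<le> dual_psi_norm psi F" using dual_upper[OF bdd] by simp
  moreover have "\<bar>blinfun_apply F y\<bar> > 0" unfolding y_def using p Fx
    by (simp add: blinfun.scaleR_right)
  ultimately show ?thesis by linarith
qed

lemma exists_nonzero_F:
  assumes "\<exists>x::'a::real_normed_vector. x \<noteq> 0"
  shows "\<exists>F :: (('a::real_normed_vector)^'n) \<Rightarrow>\<^sub>L real. F \<noteq> 0"
proof -
  obtain v :: 'a where v: "v \<noteq> 0" using assms by blast
  obtain f :: "'a \<Rightarrow> real" where f: "bounded_linear f" "f v \<noteq> 0"
    using exists_nonzero_functional[OF v] by blast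
  define i0 :: 'n where "i0 = undefined"
  have bl: "bounded_linear (\<lambda>x::'a^'n. f (x $ i0))"
    by (rule bounded_linear_compose[OF f(1) bounded_linear_vec_nth])
  define F where "F = Blinfun (\<lambda>x::'a^'n. f (x $ i0))"
  have "blinfun_apply F (vec v) = f v"
    unfolding F_def bounded_linear_Blinfun_apply[OF bl] by simp
  then have "F \<noteq> 0" using f(2) by auto
  then show ?thesis by blast
qed


lemma final_alg:
  fixes m M X Y :: real
  assumes "0 < m" "0 < M" "X \<le> (M/m)^2 * Y"
  shows "m^2 / M^2 * X \<le> Y"
proof -
  have "m^2 / M^2 * X \<le> m^2 / M^2 * ((M/m)^2 * Y)"
    using assms by (intro mult_left_mono) auto
  also have "\<dots> = Y" using assms by (simp add: power_divide)
  finally show ?thesis .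
qed

theorem theorem6p2:
  fixes psi phi :: "real^'n \<Rightarrow> real"
  assumes "CARD('n) \<ge> 2"
    and "\<exists>x::'a::real_normed_vector. x \<noteq> 0"
    and "psi \<in> PsiClass" and "phi \<in> PsiClass"
  defines "m \<equiv> Inf ((\<lambda>t. psi t / phi t) ` Omega)"
    and "M \<equiv> Sup ((\<lambda>t. psi t / phi t) ` Omega)"
  shows "(m^2 / M^2 * cNJ (psi_norm phi :: 'a^'n \<Rightarrow> real) \<le> cNJ (psi_norm psi :: 'a^'n \<Rightarrow> real)
         \<and> cNJ (psi_norm psi :: 'a^'n \<Rightarrow> real) \<le> M^2 / m^2 * cNJ (psi_norm phi :: 'a^'n \<Rightarrow> real))
    \<and> (m^2 / M^2 * cNJ (dual_psi_norm phi :: (('a^'n) \<Rightarrow>\<^sub>L real) \<Rightarrow> real)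
           \<le> cNJ (dual_psi_norm psi :: (('a^'n) \<Rightarrow>\<^sub>L real) \<Rightarrow> real)
         \<and> cNJ (dual_psi_norm psi :: (('a^'n) \<Rightarrow>\<^sub>L real) \<Rightarrow> real)
           \<le> M^2 / m^2 * cNJ (dual_psi_norm phi :: (('a^'n) \<Rightarrow>\<^sub>L real) \<Rightarrow> real))"
proof -
  note psi = assms(3) and phi = assms(4)
  obtain c1 C1 where c1: "0 < c1" "\<forall>t\<in>Omega. c1 \<le> psi t \<and> psi t \<le> C1"
    using psi_bounds[OF psi] by blast
  obtain c2 C2 where c2: "0 < c2" "\<forall>t\<in>Omega. c2 \<le> phi t \<and> phi t \<le> C2"
    using psi_bounds[OF phi] by blast
  have ax: "(axis undefined 1 :: real^'n) \<in> Omega" by (rule axis_Omega)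
  have C1: "0 < C1" using c1 ax by force
  have C2: "0 < C2" using c2 ax by force
  define r where "r t = psi t / phi t" for t :: "real^'n"
  have phipos: "\<And>t. t \<in> Omega \<Longrightarrow> 0 < phi t" using psi_pos[OF phi] .
  have cpsi: "continuous_on Omega psi" using psi by (simp add: PsiClass_def)
  have cphi: "continuous_on Omega phi" using phi by (simp add: PsiClass_def)
  have nz: "\<forall>t\<in>Omega. phi t \<noteq> 0" using phipos by force
  have co: "continuous_on Omega r" unfolding r_def
    by (rule continuous_on_divide[OF cpsi cphi]) (use nz in blast)
  have K: "compact (r ` Omega)" by (rule compact_continuous_image[OF co Omega_compact])
  have ne: "r ` Omega \<noteq> {}" using Omega_ne by blast
  obtain s where s: "s \<in> r ` Omega" "\<forall>u\<in>r ` Omega. s \<le> u" using compact_attains_inf[OF K ne] by blast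
  obtain S where S: "S \<in> r ` Omega" "\<forall>u\<in>r ` Omega. u \<le> S" using compact_attains_sup[OF K ne] by blast
  have mdef: "m = s" unfolding m_def r_def[symmetric] using s by (intro cInf_eq_minimum) auto
  have Mdef: "M = S" unfolding M_def r_def[symmetric] using S by (intro cSup_eq_maximum) auto
  have rpos: "\<And>t. t \<in> Omega \<Longrightarrow> 0 < r t" unfolding r_def using psi_pos[OF psi] phipos by simp
  have mpos: "0 < m" using s(1) rpos mdef by auto
  have Mpos: "0 < M" using S(1) rpos Mdef by auto
  have lowr: "\<forall>t\<in>Omega. m * phi t \<le> psi t"
  proof
    fix t :: "real^'n" assume t: "t \<in> Omega"
    have "m \<le> psi t / phi t" using s(2) t mdef unfolding r_def by auto
    then show "m * phi t \<le> psi t" using phipos[OF t] by (simp add: pos_le_divide_eq)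
  qed
  have upr: "\<forall>t\<in>Omega. psi t \<le> M * phi t"
  proof
    fix t :: "real^'n" assume t: "t \<in> Omega"
    have "psi t / phi t \<le> M" using S(2) t Mdef unfolding r_def by auto
    then show "psi t \<le> M * phi t" using phipos[OF t] by (simp add: pos_divide_le_eq)
  qed
  have lowr': "\<forall>t\<in>Omega. phi t \<le> (1/m) * psi t"
    using lowr mpos by (auto simp: field_simps)
  define Np where "Np = (psi_norm psi :: 'a^'n \<Rightarrow> real)"
  define Nf where "Nf = (psi_norm phi :: 'a^'n \<Rightarrow> real)"
  have A: "\<And>v. Np v \<le> M * Nf v" unfolding Np_def Nf_def by (rule psi_norm_le[OF upr])
  have B: "\<And>v. Nf v \<le> (1/m) * Np v" unfolding Np_def Nf_def by (rule psi_norm_le[OF lowr'])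
  have A': "\<And>v. (1/M) * Np v \<le> Nf v" using A Mpos by (simp add: field_simps)
  have B': "\<And>v. m * Nf v \<le> Np v" using B mpos by (simp add: field_simps)
  have nnp: "\<And>v. 0 \<le> Np v" unfolding Np_def using c1 by (intro psi_norm_nonneg) auto
  have nnf: "\<And>v. 0 \<le> Nf v" unfolding Nf_def using c2 by (intro psi_norm_nonneg) auto
  have lo1: "\<And>v. c1 * l1n v \<le> Np v" unfolding Np_def psi_norm_one[symmetric]
    by (rule psi_norm_ge) (use c1 in auto)
  have up1: "\<And>v. Np v \<le> C1 * l1n v" unfolding Np_def psi_norm_one[symmetric]
    by (rule psi_norm_le) (use c1 in auto)
  have lo2: "\<And>v. c2 * l1n v \<le> Nf v" unfolding Nf_def psi_norm_one[symmetric]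
    by (rule psi_norm_ge) (use c2 in auto)
  have up2: "\<And>v. Nf v \<le> C2 * l1n v" unfolding Nf_def psi_norm_one[symmetric]
    by (rule psi_norm_le) (use c2 in auto)
  have bddp: "bdd_above {((Np (x + y))^2 + (Np (x - y))^2) / (2 * ((Np x)^2 + (Np y)^2)) | x y. Np x + Np y > 0}"
    by (rule nj_bdd[OF lo1 up1 c1(1) C1 l1n_nonneg l1n_add l1n_diff])
  have bddf: "bdd_above {((Nf (x + y))^2 + (Nf (x - y))^2) / (2 * ((Nf x)^2 + (Nf y)^2)) | x y. Nf x + Nf y > 0}"
    by (rule nj_bdd[OF lo2 up2 c2(1) C2 l1n_nonneg l1n_add l1n_diff])
  obtain v :: 'a where v: "v \<noteq> 0" using assms(2) by blast
  have vv: "(vec v :: 'a^'n) \<noteq> 0" using v by (simp add: vec_eq_iff)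
  have exp: "\<exists>x y. Np x + Np y > 0"
    using psi_norm_pos[OF psi vv] unfolding Np_def by (intro exI[of _ "vec v"]) auto
  have exf: "\<exists>x y. Nf x + Nf y > 0"
    using psi_norm_pos[OF phi vv] unfolding Nf_def by (intro exI[of _ "vec v"]) auto
  have i1: "cNJ Np \<le> (M/m)^2 * cNJ Nf"
    by (rule nj_cmp[OF B' A mpos Mpos nnf bddf exp])
  have i2: "cNJ Nf \<le> ((1/m)/(1/M))^2 * cNJ Np"
    by (rule nj_cmp[OF A' B _ _ nnp bddp exf]) (use mpos Mpos in auto)
  have i2': "cNJ Nf \<le> (M/m)^2 * cNJ Np" using i2 mpos Mpos by simp
  define Dp where "Dp = (dual_psi_norm psi :: (('a^'n) \<Rightarrow>\<^sub>L real) \<Rightarrow> real)"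
  define Df where "Df = (dual_psi_norm phi :: (('a^'n) \<Rightarrow>\<^sub>L real) \<Rightarrow> real)"
  have bp: "\<And>F :: ('a^'n) \<Rightarrow>\<^sub>L real. bdd_above {\<bar>blinfun_apply F x\<bar> | x. psi_norm psi x \<le> 1}"
    by (rule dual_set_bdd) (use c1 in auto)
  have bf: "\<And>F :: ('a^'n) \<Rightarrow>\<^sub>L real. bdd_above {\<bar>blinfun_apply F x\<bar> | x. psi_norm phi x \<le> 1}"
    by (rule dual_set_bdd) (use c2 in auto)
  have DA: "\<And>F. Df F \<le> M * Dp F" unfolding Dp_def Df_def by (rule dual_cmp[OF upr Mpos bp])
  have DB: "\<And>F. Dp F \<le> (1/m) * Df F" unfolding Dp_def Df_def by (rule dual_cmp[OF lowr' _ bf]) (use mpos in simp)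
  have DA': "\<And>F. (1/M) * Df F \<le> Dp F" using DA Mpos by (simp add: field_simps)
  have DB': "\<And>F. m * Dp F \<le> Df F" using DB mpos by (simp add: field_simps)
  have dnp: "\<And>F. 0 \<le> Dp F" unfolding Dp_def by (rule dual_nonneg[OF bp])
  have dnf: "\<And>F. 0 \<le> Df F" unfolding Df_def by (rule dual_nonneg[OF bf])
  have tap: "\<And>F G. Dp (F+G) \<le> Dp F + Dp G" unfolding Dp_def by (rule dual_add(1)[OF bp bp])
  have tdp: "\<And>F G. Dp (F-G) \<le> Dp F + Dp G" unfolding Dp_def by (rule dual_add(2)[OF bp bp])
  have dbddp: "bdd_above {((Dp (x + y))^2 + (Dp (x - y))^2) / (2 * ((Dp x)^2 + (Dp y)^2)) | x y. Dp x + Dp y > 0}"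
    by (rule nj_bdd[where a=1 and b=1, OF _ _ _ _ dnp tap tdp]) auto
  have taf: "\<And>F G. Df (F+G) \<le> Df F + Df G" unfolding Df_def by (rule dual_add(1)[OF bf bf])
  have tdf: "\<And>F G. Df (F-G) \<le> Df F + Df G" unfolding Df_def by (rule dual_add(2)[OF bf bf])
  have dbddf: "bdd_above {((Df (x + y))^2 + (Df (x - y))^2) / (2 * ((Df x)^2 + (Df y)^2)) | x y. Df x + Df y > 0}"
    by (rule nj_bdd[where a=1 and b=1, OF _ _ _ _ dnf taf tdf]) auto
  obtain F0 :: "('a^'n) \<Rightarrow>\<^sub>L real" where F0: "F0 \<noteq> 0" using exists_nonzero_F[OF assms(2)] by blast
  have exdp: "\<exists>x y. Dp x + Dp y > 0"
    using dual_pos[OF psi bp F0] unfolding Dp_def by (intro exI[of _ F0]) auto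
  have exdf: "\<exists>x y. Df x + Df y > 0"
    using dual_pos[OF phi bf F0] unfolding Df_def by (intro exI[of _ F0]) auto
  have d1: "cNJ Dp \<le> ((1/m)/(1/M))^2 * cNJ Df"
    by (rule nj_cmp[OF DA' DB _ _ dnf dbddf exdp]) (use mpos Mpos in auto)
  have d1': "cNJ Dp \<le> (M/m)^2 * cNJ Df" using d1 mpos Mpos by simp
  have d2: "cNJ Df \<le> (M/m)^2 * cNJ Dp"
    by (rule nj_cmp[OF DB' DA mpos Mpos dnp dbddp exdf])
  show ?thesis
    using final_alg[OF mpos Mpos i2'] final_alg[OF mpos Mpos d2] i1 d1'
    unfolding Np_def Nf_def Dp_def Df_def by (simp add: power_divide)
qed


end
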